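(* Let $a_1,a_2>0$, $e_1,e_2\in[0,1)$, and let $K,L,M,N$ be the real numbers defined in the context. For $u_2\in\mathbb{R}$ define \[ \begin{split} \lambda &= a_1e_1^2,\\ \mu &= a_2\sqrt{1-e_1^2}\Bigl(\sqrt{1-e_2^2}\,N\sin u_2 + L\cos u_2 - e_2 L\Bigr),\\ \nu &= a_2e_2K - a_1e_1 - a_2\sqrt{1-e_2^2}\,M\sin u_2 - a_2K\cos u_2,\\ \alpha &= a_1\Bigl(\sqrt{1-e_2^2}\,M\cos u_2 - K\sin u_2\Bigr),\\ \beta &= a_1\sqrt{1-e_1^2}\Bigl(\sqrt{1-e_2^2}\,N\cos u_2 - L\sin u_2\Bigr),\\ \gamma &= a_2e_2^2\sin u_2\cos u_2 - a_1e_1\sqrt{1-e_2^2}\,M\cos u_2 + (a_1e_1K - a_2e_2)\sin u_2, \end{split} \] and let \[ \mathscr{S}(u_2) = \begin{pmatrix} \alpha^2+\beta^2 & 0 & -\alpha\lambda & 0\\ 2\alpha\gamma & \alpha^2+\beta^2 & \beta\mu - \lambda\gamma-\alpha\nu & -\alpha\lambda\\ \gamma^2-\beta^2 & 2\alpha\gamma & -\gamma\nu & \beta\mu-\lambda\gamma-\alpha\nu\\ 0 &\gamma^2-\beta^2 & 0 &-\gamma\nu \end{pmatrix} \] (the Sylvester matrix, with respect to $\cos u_1$, of the two polynomials $(\alpha^2+\beta^2)\cos^2 u_1 + 2\alpha\gamma\cos u_1 + \gamma^2-\beta^2$ and $- \alpha\lambda\cos^2 u_1 + (\beta\mu - \lambda\gamma-\alpha\nu)\cos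 u_1 -\gamma\nu$). Then $\det\mathscr{S}(u_2)$ contains the factor $\beta^2$: there is a polynomial $P$ in $\alpha,\beta,\gamma,\lambda,\mu,\nu$ (hence a trigonometric polynomial $g(u_2)$ in $\cos u_2,\sin u_2$) such that $\det\mathscr{S}(u_2)=\beta(u_2)^2\, g(u_2)$ for all $u_2$.
   Context: Two confocal elliptic orbits $\mathcal{E}_1,\mathcal{E}_2$ are given by Keplerian elements $a_i$ (semimajor axis), $e_i$ (eccentricity), $i_i$ (inclination), $\Omega_i$ (longitude of node), $\omega_i$ (argument of pericenter), $i=1,2$. Define the unit vectors $\mathcal{P}=(\cos\omega_1\cos\Omega_1-\cos i_1\sin\omega_1\sin\Omega_1,\ \cos\omega_1\sin\Omega_1+\cos i_1\sin\omega_1\cos\Omega_1,\ \sin\omega_1\sin i_1)$, $\mathcal{Q}=(-\sin\omega_1\cos\Omega_1-\cos i_1\cos\omega_1\sin\Omega_1,\ -\sin\omega_1\sin\Omega_1+\cos i_1\cos\omega_1\cos\Omega_1,\ \cos\omega_1\sin i_1)$, and $\mathfrak{p},\mathfrak{q}$ by the same formulas with $(i_2,\Omega_2,\omega_2)$ in place of $(i_1,\Omega_1,\omega_1)$. Set $K=\langle\mathcal{P},\mathfrak{p}\rangle$, $L=\langle\mathcal{Q},\mathfrak{p}\rangle$, $M=\langle\mathcal{P},\mathfrak{q}\rangle$, $N=\langle\mathcal{Q},\mathfrak{q}\rangle$. Here $u_1,u_2$ are the eccentric anomalies on the two orbits. *)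

theory Defs
  imports "HOL-Analysis.Analysis"
begin

definition Pvec :: "real \<Rightarrow> real \<Rightarrow> real \<Rightarrow> real \<times> real \<times> real" where
  "Pvec inc Om om = (cos om * cos Om - cos inc * sin om * sin Om,
                     cos om * sin Om + cos inc * sin om * cos Om,
                     sin om * sin inc)"

definition Qvec :: "real \<Rightarrow> real \<Rightarrow> real \<Rightarrow> real \<times> real \<times> real" where
  "Qvec inc Om om = (- sin om * cos Om - cos inc * cos om * sin Om,
                     - sin om * sin Om + cos inc * cos om * cos Om,
                     cos om * sin inc)"

definition inner3 :: "real \<times> real \<times> real \<Rightarrow> real \<times> real \<times> real \<Rightarrow> real" where
  "inner3 x y = fst x * fst y + fst (snd x) * fst (snd y) + snd (snd x) * snd (snd y)"


definition Kc :: "real \<Rightarrow> real \<Rightarrow> real \<Rightarrow> real \<Rightarrow> real \<Rightarrow> real \<Rightarrow> real" where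
  "Kc i1 O1 w1 i2 O2 w2 = inner3 (Pvec i1 O1 w1) (Pvec i2 O2 w2)"
definition Lc :: "real \<Rightarrow> real \<Rightarrow> real \<Rightarrow> real \<Rightarrow> real \<Rightarrow> real \<Rightarrow> real" where
  "Lc i1 O1 w1 i2 O2 w2 = inner3 (Qvec i1 O1 w1) (Pvec i2 O2 w2)"
definition Mc :: "real \<Rightarrow> real \<Rightarrow> real \<Rightarrow> real \<Rightarrow> real \<Rightarrow> real \<Rightarrow> real" where
  "Mc i1 O1 w1 i2 O2 w2 = inner3 (Pvec i1 O1 w1) (Qvec i2 O2 w2)"
definition Nc :: "real \<Rightarrow> real \<Rightarrow> real \<Rightarrow> real \<Rightarrow> real \<Rightarrow> real \<Rightarrow> real" where
  "Nc i1 O1 w1 i2 O2 w2 = inner3 (Qvec i1 O1 w1) (Qvec i2 O2 w2)"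

text \<open>A 4x4 real matrix given row by row (rows/columns indexed 1,2,3,4 in the type 4,
  where the fourth element is 0 = 4).\<close>
definition sel4 :: "4 \<Rightarrow> 'a \<Rightarrow> 'a \<Rightarrow> 'a \<Rightarrow> 'a \<Rightarrow> 'a" where
  "sel4 i x1 x2 x3 x4 = (if i = 1 then x1 else if i = 2 then x2 else if i = 3 then x3 else x4)"

definition mat4 :: "real \<times> real \<times> real \<times> real \<Rightarrow> real \<times> real \<times> real \<times> real \<Rightarrow>
                    real \<times> real \<times> real \<times> real \<Rightarrow> real \<times> real \<times> real \<times> real \<Rightarrow> real^4^4" where
  "mat4 r1 r2 r3 r4 = (\<chi> i j. (case sel4 i r1 r2 r3 r4 of (x1, x2, x3, x4) \<Rightarrow> sel4 j x1 x2 x3 x4))"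

definition sylS :: "real \<Rightarrow> real \<Rightarrow> real \<Rightarrow> real \<Rightarrow> real \<Rightarrow> real \<Rightarrow> real^4^4" where
  "sylS \<alpha> \<beta> \<gamma> lam \<mu> \<nu> = mat4
     (\<alpha>\<^sup>2 + \<beta>\<^sup>2, 0, - \<alpha> * lam, 0)
     (2 * \<alpha> * \<gamma>, \<alpha>\<^sup>2 + \<beta>\<^sup>2, \<beta> * \<mu> - lam * \<gamma> - \<alpha> * \<nu>, - \<alpha> * lam)
     (\<gamma>\<^sup>2 - \<beta>\<^sup>2, 2 * \<alpha> * \<gamma>, - \<gamma> * \<nu>, \<beta> * \<mu> - lam * \<gamma> - \<alpha> * \<nu>)
     (0, \<gamma>\<^sup>2 - \<beta>\<^sup>2, 0, - \<gamma> * \<nu>)"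

definition mpoly6_eval ::
  "(nat \<times> nat \<times> nat \<times> nat \<times> nat \<times> nat) set \<Rightarrow> (nat \<times> nat \<times> nat \<times> nat \<times> nat \<times> nat \<Rightarrow> real)
   \<Rightarrow> real \<Rightarrow> real \<Rightarrow> real \<Rightarrow> real \<Rightarrow> real \<Rightarrow> real \<Rightarrow> real" where
  "mpoly6_eval S c x1 x2 x3 x4 x5 x6 =
     (\<Sum>(i1, i2, i3, i4, i5, i6)\<in>S. c (i1, i2, i3, i4, i5, i6) *
        x1 ^ i1 * x2 ^ i2 * x3 ^ i3 * x4 ^ i4 * x5 ^ i5 * x6 ^ i6)"

end

theory Submission
  imports Defs
begin

lemma det_4: "det (A::'a::comm_ring_1^4^4) = A$1$1 * A$2$2 * A$3$3 * A$4$4 + A$1$1 * A$2$3 * A$3$4 * A$4$2 + A$1$1 * A$2$4 * A$3$2 * A$4$3 + A$1$2 * A$2$1 * A$3$4 * A$4$3 + A$1$2 * A$2$3 * A$3$1 * A$4$4 + A$1$2 * A$2$4 * A$3$3 * A$4$1 + A$1$3 * A$2$1 * A$3$2 * A$4$4 + A$1$3 * A$2$2 * A$3$4 * A$4$1 + A$1$3 * A$2$4 * A$3$1 * A$4$2 + A$1$4 * A$2$1 * A$3$3 * A$4$2 + A$1$4 * A$2$2 * A$3$1 * A$4$3 + A$1$4 * A$2$3 * A$3$2 * A$4$1 - (A$1$1 * A$2$2 * A$3$4 * A$4$3 + A$1$1 * A$2$3 * A$3$2 * A$4$4 + A$1$1 * A$2$4 * A$3$3 * A$4$2 + A$1$2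 * A$2$1 * A$3$3 * A$4$4 + A$1$2 * A$2$3 * A$3$4 * A$4$1 + A$1$2 * A$2$4 * A$3$1 * A$4$3 + A$1$3 * A$2$1 * A$3$4 * A$4$2 + A$1$3 * A$2$2 * A$3$1 * A$4$4 + A$1$3 * A$2$4 * A$3$2 * A$4$1 + A$1$4 * A$2$1 * A$3$2 * A$4$3 + A$1$4 * A$2$2 * A$3$3 * A$4$1 + A$1$4 * A$2$3 * A$3$1 * A$4$2)"
proof -
  have f1: "finite {2::4, 3, 4}" "1 \<notin> {2::4, 3, 4}" by auto
  have f2: "finite {3::4, 4}" "2 \<notin> {3::4, 4}" by auto
  have f3: "finite {4::4}" "3 \<notin> {4::4}" by auto
  show ?thesis
    unfolding det_def UNIV_4
    unfolding sum_over_permutations_insert[OF f1]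
    unfolding sum_over_permutations_insert[OF f2]
    unfolding sum_over_permutations_insert[OF f3]
    unfolding permutes_sing
    by (simp add: sign_swap_id permutation_swap_id permutation_compose sign_compose sign_id swap_id_eq algebra_simps)
qed

definition S0 :: "(nat \<times> nat \<times> nat \<times> nat \<times> nat \<times> nat) set" where
  "S0 = {(0,0,4,2,0,0), (0,1,3,1,1,0), (0,2,2,0,0,2), (0,2,2,0,2,0), (0,2,2,2,0,0), (0,3,1,1,1,0), (0,4,0,0,2,0), (1,0,3,1,0,1), (1,3,0,0,1,1), (2,0,2,0,0,2), (2,0,2,0,2,0), (2,0,2,2,0,0), (2,2,0,0,0,2), (2,2,0,0,2,0), (2,2,0,2,0,0), (3,0,1,1,0,1), (3,1,0,0,1,1), (4,0,0,0,0,2)}"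

definition c0 :: "nat \<times> nat \<times> nat \<times> nat \<times> nat \<times> nat \<Rightarrow> real" where
  "c0 t = (if t = (0,0,4,2,0,0) then 1 else if t = (0,1,3,1,1,0) then -2 else if t = (0,2,2,0,0,2) then 1 else if t = (0,2,2,0,2,0) then 1 else if t = (0,2,2,2,0,0) then -1 else if t = (0,3,1,1,1,0) then 2 else if t = (0,4,0,0,2,0) then -1 else if t = (1,0,3,1,0,1) then -2 else if t = (1,3,0,0,1,1) then 2 else if t = (2,0,2,0,0,2) then 1 else if t = (2,0,2,0,2,0) then 1 else if t = (2,0,2,2,0,0) then -1 else if t = (2,2,0,0,0,2) then -1 else if t = (2,2,0,0,2,0) then -1 else if t = (2,2,0,2,0,0) then 1 else if t = (3,0,1,1,0,1) then 2 else if t = (3,1,0,0,1,1) then 2 else if t = (4,0,0,0,0,2) then -1 else 0)"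

lemma eval0: "mpoly6_eval S0 c0 x1 x2 x3 x4 x5 x6 = (1)*x3^4*x4^2 + (-2)*x2*x3^3*x4*x5 + (1)*x2^2*x3^2*x6^2 + (1)*x2^2*x3^2*x5^2 + (-1)*x2^2*x3^2*x4^2 + (2)*x2^3*x3*x4*x5 + (-1)*x2^4*x5^2 + (-2)*x1*x3^3*x4*x6 + (2)*x1*x2^3*x5*x6 + (1)*x1^2*x3^2*x6^2 + (1)*x1^2*x3^2*x5^2 + (-1)*x1^2*x3^2*x4^2 + (-1)*x1^2*x2^2*x6^2 + (-1)*x1^2*x2^2*x5^2 + (1)*x1^2*x2^2*x4^2 + (2)*x1^3*x3*x4*x6 + (2)*x1^3*x2*x5*x6 + (-1)*x1^4*x6^2"
  unfolding mpoly6_eval_def S0_def by (simp add: c0_def)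

lemma det_syl: "det (sylS x1 x2 x3 x4 x5 x6) = x2^2 * mpoly6_eval S0 c0 x1 x2 x3 x4 x5 x6"
  unfolding eval0 det_4 sylS_def mat4_def
  by (simp add: sel4_def, algebra)

theorem mainTheorem1:
  fixes a1 a2 e1 e2 i1 i2 \<Omega>1 \<Omega>2 \<omega>1 \<omega>2 :: real
  assumes "a1 > 0" "a2 > 0" "0 \<le> e1" "e1 < 1" "0 \<le> e2" "e2 < 1"
  shows "let K = Kc i1 \<Omega>1 \<omega>1 i2 \<Omega>2 \<omega>2; L = Lc i1 \<Omega>1 \<omega>1 i2 \<Omega>2 \<omega>2;
             M = Mc i1 \<Omega>1 \<omega>1 i2 \<Omega>2 \<omega>2; N = Nc i1 \<Omega>1 \<omega>1 i2 \<Omega>2 \<omega>2;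
             lam = a1 * e1\<^sup>2;
             \<mu> = (\<lambda>u2. a2 * sqrt (1 - e1\<^sup>2) *
                   (sqrt (1 - e2\<^sup>2) * N * sin u2 + L * cos u2 - e2 * L));
             \<nu> = (\<lambda>u2. a2 * e2 * K - a1 * e1 - a2 * sqrt (1 - e2\<^sup>2) * M * sin u2 - a2 * K * cos u2);
             \<alpha> = (\<lambda>u2. a1 * (sqrt (1 - e2\<^sup>2) * M * cos u2 - K * sin u2));
             \<beta> = (\<lambda>u2. a1 * sqrt (1 - e1\<^sup>2) * (sqrt (1 - e2\<^sup>2) * N * cos u2 - L * sin u2));
             \<gamma> = (\<lambda>u2. a2 * e2\<^sup>2 * sin u2 * cos u2 - a1 * e1 * sqrt (1 - e2\<^sup>2) * M * cos u2
                   + (a1 * e1 * K - a2 * e2) * sin u2)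
         in \<exists>S c. finite S \<and>
              (\<forall>u2. det (sylS (\<alpha> u2) (\<beta> u2) (\<gamma> u2) lam (\<mu> u2) (\<nu> u2)) =
                    (\<beta> u2)\<^sup>2 * mpoly6_eval S c (\<alpha> u2) (\<beta> u2) (\<gamma> u2) lam (\<mu> u2) (\<nu> u2))"
  using det_syl unfolding Let_def
  by (intro exI[of _ S0] exI[of _ c0]) (simp add: S0_def)

end
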